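(* Let $T$ be a causal theory with explainable symbols $\mathbf{p}$ all of whose rules are D-rules. Then the implication $$(\mathbf{u},\widehat{\mathbf{u}})\le(\mathbf{p},\neg\mathbf{p})\ \to\ \big(T^\dagger(\mathbf{u})_{\Sigma 2}\leftrightarrow H(\mathbf{u},\widehat{\mathbf{u}})\big)$$ is logically valid.
   Context: A causal theory $T$ consists of a list $\mathbf{p}$ of distinct predicate constants (explainable symbols, not equality) and a finite set of causal rules $F\Leftarrow G$. A D-rule has the form $\bigvee_{A\in Pos}A\lor\bigvee_{A\in Neg}\neg A\Leftarrow G$ with $Pos,Neg$ finite sets of atoms whose predicates belong to $\mathbf{p}$, $G$ a first-order formula without $\to$. For each $p\in\mathbf{p}$, $u_p,\widehat u_p$ are predicate variables of the arity of $p$, with lists $\mathbf{u},\widehat{\mathbf{u}}$; for $A=p(\mathbf{t})$, $u(A)=u_p(\mathbf{t})$, $\widehat u(A)=\widehat u_p(\mathbf{t})$. $\neg\mathbf{p}$ is the list of $\lambda\mathbf{x}\neg p(\mathbf{x})$; $p\le q$ is $\forall\mathbf{x}(p(\mathbf{x})\to q(\mathbf{x}))$, componentwise conjunction for tuples ($u_p$ matched with $p$, $\widehat u_p$ with $\lambda\mathbf{x}\neg p(\mathbf{x})$). $T^\dagger(\mathbf{u})$ is the conjunction over rules of $\forall\mathbf{x}(G\to F^{\mathbf{p}}_{\mathbf{u}})$, $\mathbf{x}$ the free variables, $F^{\mathbf{p}}_{\mathbf{u}}$ replacing each $p$ by $u_p$. $H(\mathbf{u},\widehat{\mathbf{u}})$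 is the conjunction over all rules of $\forall\mathbf{x}\Big(G\to\bigvee_{A\in Pos}\big((\widehat u(A)\lor A)\to u(A)\big)\lor\bigvee_{A\in Neg}\big((u(A)\lor\neg A)\to\widehat u(A)\big)\Big)$, $\mathbf{x}$ the free object variables. For a formula $F$, $F_{\Sigma 2}$ is the result of substituting simultaneously for each $u_p$ the predicate expression $\lambda\mathbf{x}\Big(\big(((\mathbf{u},\widehat{\mathbf{u}})\le(\mathbf{p},\neg\mathbf{p}))\land\neg u_p(\mathbf{x})\land\neg\widehat u_p(\mathbf{x})\big)\leftrightarrow\neg p(\mathbf{x})\Big)$. *)

theory Defs
  imports Main
begin

text \<open>Object variables are natural numbers; 'f are function
  symbols, 'p the explainable predicate constants, 'q the other (non-explainable)
  predicate constants.\<close>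

datatype 'f trm = Var nat | Fn 'f "'f trm list"

datatype ('p, 'q, 'f) fm =
    FTrue | FFalse
  | PAtom 'p "'f trm list"
  | QAtom 'q "'f trm list"
  | Eq "'f trm" "'f trm"
  | Neg "('p, 'q, 'f) fm"
  | Conj "('p, 'q, 'f) fm" "('p, 'q, 'f) fm"
  | Disj "('p, 'q, 'f) fm" "('p, 'q, 'f) fm"
  | Ex nat "('p, 'q, 'f) fm"
  | All nat "('p, 'q, 'f) fm"

fun evalt :: "('f \<Rightarrow> 'a list \<Rightarrow> 'a) \<Rightarrow> (nat \<Rightarrow> 'a) \<Rightarrow> 'f trm \<Rightarrow> 'a" where
  "evalt F \<sigma> (Var n) = \<sigma> n"
| "evalt F \<sigma> (Fn f ts) = F f (map (evalt F \<sigma>) ts)"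

fun eval :: "('f \<Rightarrow> 'a list \<Rightarrow> 'a) \<Rightarrow> ('q \<Rightarrow> 'a list \<Rightarrow> bool) \<Rightarrow> ('p \<Rightarrow> 'a list \<Rightarrow> bool)
              \<Rightarrow> (nat \<Rightarrow> 'a) \<Rightarrow> ('p, 'q, 'f) fm \<Rightarrow> bool" where
  "eval F Q P \<sigma> FTrue = True"
| "eval F Q P \<sigma> FFalse = False"
| "eval F Q P \<sigma> (PAtom p ts) = P p (map (evalt F \<sigma>) ts)"
| "eval F Q P \<sigma> (QAtom q ts) = Q q (map (evalt F \<sigma>) ts)"
| "eval F Q P \<sigma> (Eq s t) = (evalt F \<sigma> s = evalt F \<sigma> t)"
| "eval F Q P \<sigma> (Neg a) = (\<not> eval F Q P \<sigma> a)"
| "eval F Q P \<sigma> (Conj a b) = (eval F Q P \<sigma> a \<and> eval F Q P \<sigma> b)"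
| "eval F Q P \<sigma> (Disj a b) = (eval F Q P \<sigma> a \<or> eval F Q P \<sigma> b)"
| "eval F Q P \<sigma> (Ex n a) = (\<exists>d. eval F Q P (\<sigma>(n := d)) a)"
| "eval F Q P \<sigma> (All n a) = (\<forall>d. eval F Q P (\<sigma>(n := d)) a)"

fun wf_fm :: "('p \<Rightarrow> nat) \<Rightarrow> ('p, 'q, 'f) fm \<Rightarrow> bool" where
  "wf_fm ar (PAtom p ts) = (length ts = ar p)"
| "wf_fm ar (Neg a) = wf_fm ar a"
| "wf_fm ar (Conj a b) = (wf_fm ar a \<and> wf_fm ar b)"
| "wf_fm ar (Disj a b) = (wf_fm ar a \<and> wf_fm ar b)"
| "wf_fm ar (Ex n a) = wf_fm ar a"
| "wf_fm ar (All n a) = wf_fm ar a"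
| "wf_fm ar _ = True"

type_synonym ('p, 'f) atom = "'p \<times> 'f trm list"

text \<open>A D-rule  \<Or>_{A\<in>Ps} A \<or> \<Or>_{A\<in>Ns} \<not>A \<Leftarrow> G, represented as (Ps, Ns, G).\<close>
type_synonym ('p, 'q, 'f) drule = "('p, 'f) atom set \<times> ('p, 'f) atom set \<times> ('p, 'q, 'f) fm"

definition wf_atom :: "('p \<Rightarrow> nat) \<Rightarrow> ('p, 'f) atom \<Rightarrow> bool" where
  "wf_atom ar A = (length (snd A) = ar (fst A))"

definition wf_drule :: "('p \<Rightarrow> nat) \<Rightarrow> ('p, 'q, 'f) drule \<Rightarrow> bool" where
  "wf_drule ar r = (case r of (Ps, Ns, G) \<Rightarrow>
      finite Ps \<and> finite Ns \<and> (\<forall>A\<in>Ps. wf_atom ar A) \<and> (\<forall>A\<in>Ns. wf_atom ar A) \<and> wf_fm ar G)"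

text \<open>Value of the atom A with its predicate replaced by the predicate variable family u
  (i.e. u(A) = u_p(t)); with u = P this is the value of A itself.\<close>
definition atval :: "('f \<Rightarrow> 'a list \<Rightarrow> 'a) \<Rightarrow> (nat \<Rightarrow> 'a) \<Rightarrow> ('p \<Rightarrow> 'a list \<Rightarrow> bool)
                     \<Rightarrow> ('p, 'f) atom \<Rightarrow> bool" where
  "atval F \<sigma> u A = u (fst A) (map (evalt F \<sigma>) (snd A))"

definition le_pair :: "('p \<Rightarrow> nat) \<Rightarrow> ('p \<Rightarrow> 'a list \<Rightarrow> bool) \<Rightarrow> ('p \<Rightarrow> 'a list \<Rightarrow> bool)
                       \<Rightarrow> ('p \<Rightarrow> 'a list \<Rightarrow> bool) \<Rightarrow> bool" where
  "le_pair ar u uh P = (\<forall>p xs. length xs = ar p \<longrightarrow>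
      (u p xs \<longrightarrow> P p xs) \<and> (uh p xs \<longrightarrow> \<not> P p xs))"

text \<open>T\<dagger>(u): conjunction over rules of \<forall>x (G \<longrightarrow> F^p_u) (universal closure = all assignments).\<close>
definition Tdag :: "('f \<Rightarrow> 'a list \<Rightarrow> 'a) \<Rightarrow> ('q \<Rightarrow> 'a list \<Rightarrow> bool) \<Rightarrow> ('p \<Rightarrow> 'a list \<Rightarrow> bool)
                    \<Rightarrow> ('p, 'q, 'f) drule set \<Rightarrow> ('p \<Rightarrow> 'a list \<Rightarrow> bool) \<Rightarrow> bool" where
  "Tdag F Q P T u = (\<forall>(Ps, Ns, G)\<in>T. \<forall>\<sigma>. eval F Q P \<sigma> G \<longrightarrow>
      ((\<exists>A\<in>Ps. atval F \<sigma> u A) \<or> (\<exists>A\<in>Ns. \<not> atval F \<sigma> u A)))"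

definition Hform :: "('f \<Rightarrow> 'a list \<Rightarrow> 'a) \<Rightarrow> ('q \<Rightarrow> 'a list \<Rightarrow> bool) \<Rightarrow> ('p \<Rightarrow> 'a list \<Rightarrow> bool)
                    \<Rightarrow> ('p, 'q, 'f) drule set \<Rightarrow> ('p \<Rightarrow> 'a list \<Rightarrow> bool) \<Rightarrow> ('p \<Rightarrow> 'a list \<Rightarrow> bool) \<Rightarrow> bool" where
  "Hform F Q P T u uh = (\<forall>(Ps, Ns, G)\<in>T. \<forall>\<sigma>. eval F Q P \<sigma> G \<longrightarrow>
      ((\<exists>A\<in>Ps. (atval F \<sigma> uh A \<or> atval F \<sigma> P A) \<longrightarrow> atval F \<sigma> u A) \<or>
       (\<exists>A\<in>Ns. (atval F \<sigma> u A \<or> \<not> atval F \<sigma> P A) \<longrightarrow> atval F \<sigma> uh A)))"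

text \<open>The predicate expressions substituted for the u_p by the operation _\<Sigma>2:
  \<lambda>x. ((((u,uh) \<le> (p,\<not>p)) \<and> \<not>u_p(x) \<and> \<not>uh_p(x)) \<longleftrightarrow> \<not>p(x)).
  By the substitution lemma, the value of F_\<Sigma>2 is the value of F with u_p interpreted
  by (the extension of) these expressions.\<close>
definition sigma2 :: "('p \<Rightarrow> nat) \<Rightarrow> ('p \<Rightarrow> 'a list \<Rightarrow> bool) \<Rightarrow> ('p \<Rightarrow> 'a list \<Rightarrow> bool)
                      \<Rightarrow> ('p \<Rightarrow> 'a list \<Rightarrow> bool) \<Rightarrow> ('p \<Rightarrow> 'a list \<Rightarrow> bool)" where
  "sigma2 ar u uh P = (\<lambda>p xs. ((le_pair ar u uh P \<and> \<not> u p xs \<and> \<not> uh p xs) \<longleftrightarrow> \<not> P p xs))"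

end

theory Submission
  imports Defs
begin

lemma atom_eq:
  assumes le: "le_pair ar u uh P" and wa: "wf_atom ar A"
  shows "atval F \<sigma> (sigma2 ar u uh P) A =
     ((atval F \<sigma> uh A \<or> atval F \<sigma> P A) \<longrightarrow> atval F \<sigma> u A)"
    and "(\<not> atval F \<sigma> (sigma2 ar u uh P) A) =
     ((atval F \<sigma> u A \<or> \<not> atval F \<sigma> P A) \<longrightarrow> atval F \<sigma> uh A)"
proof -
  have len: "length (map (evalt F \<sigma>) (snd A)) = ar (fst A)"
    using wa by (simp add: wf_atom_def)
  have h: "(u (fst A) (map (evalt F \<sigma>) (snd A)) \<longrightarrow> P (fst A) (map (evalt F \<sigma>) (snd A))) \<and>
           (uh (fst A) (map (evalt F \<sigma>) (snd A)) \<longrightarrow> \<not> P (fst A) (map (evalt F \<sigma>) (snd A)))"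
    using le len unfolding le_pair_def by blast
  show "atval F \<sigma> (sigma2 ar u uh P) A =
     ((atval F \<sigma> uh A \<or> atval F \<sigma> P A) \<longrightarrow> atval F \<sigma> u A)"
    using h le unfolding atval_def sigma2_def by auto
  show "(\<not> atval F \<sigma> (sigma2 ar u uh P) A) =
     ((atval F \<sigma> u A \<or> \<not> atval F \<sigma> P A) \<longrightarrow> atval F \<sigma> uh A)"
    using h le unfolding atval_def sigma2_def by auto
qed

theorem lemma7:
  fixes ar :: "'p::finite \<Rightarrow> nat"
    and T :: "('p, 'q, 'f) drule set"
  assumes "finite T"
    and "\<forall>r\<in>T. wf_drule ar r"
  shows "\<forall>(F :: 'f \<Rightarrow> 'a list \<Rightarrow> 'a) (Q :: 'q \<Rightarrow> 'a list \<Rightarrow> bool) (P :: 'p \<Rightarrow> 'a list \<Rightarrow> bool) u uh.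
           le_pair ar u uh P \<longrightarrow>
             (Tdag F Q P T (sigma2 ar u uh P) \<longleftrightarrow> Hform F Q P T u uh)"
proof (intro allI impI)
  fix F :: "'f \<Rightarrow> 'a list \<Rightarrow> 'a" and Q :: "'q \<Rightarrow> 'a list \<Rightarrow> bool" and P :: "'p \<Rightarrow> 'a list \<Rightarrow> bool" and u uh
  assume le: "le_pair ar u uh P"
  have rule: "((\<exists>A\<in>Ps. atval F \<sigma> (sigma2 ar u uh P) A) \<or> (\<exists>A\<in>Ns. \<not> atval F \<sigma> (sigma2 ar u uh P) A)) =
      ((\<exists>A\<in>Ps. (atval F \<sigma> uh A \<or> atval F \<sigma> P A) \<longrightarrow> atval F \<sigma> u A) \<or>
       (\<exists>A\<in>Ns. (atval F \<sigma> u A \<or> \<not> atval F \<sigma> P A) \<longrightarrow> atval F \<sigma> uh A))"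
    if "(Ps, Ns, G) \<in> T" for Ps Ns G \<sigma>
  proof -
    have "\<forall>A\<in>Ps. wf_atom ar A" "\<forall>A\<in>Ns. wf_atom ar A"
      using assms(2) that unfolding wf_drule_def by auto
    then have "(\<exists>A\<in>Ps. atval F \<sigma> (sigma2 ar u uh P) A) = (\<exists>A\<in>Ps. (atval F \<sigma> uh A \<or> atval F \<sigma> P A) \<longrightarrow> atval F \<sigma> u A)"
         "(\<exists>A\<in>Ns. \<not> atval F \<sigma> (sigma2 ar u uh P) A) = (\<exists>A\<in>Ns. (atval F \<sigma> u A \<or> \<not> atval F \<sigma> P A) \<longrightarrow> atval F \<sigma> uh A)"
      using atom_eq(1)[OF le, of _ F \<sigma>] atom_eq(2)[OF le, of _ F \<sigma>] by (auto intro!: bex_cong)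
    then show ?thesis by simp
  qed
  show "Tdag F Q P T (sigma2 ar u uh P) \<longleftrightarrow> Hform F Q P T u uh"
    unfolding Tdag_def Hform_def
  proof (intro iffI ballI)
    fix r assume a: "\<forall>(Ps, Ns, G)\<in>T. \<forall>\<sigma>. eval F Q P \<sigma> G \<longrightarrow>
      ((\<exists>A\<in>Ps. atval F \<sigma> (sigma2 ar u uh P) A) \<or> (\<exists>A\<in>Ns. \<not> atval F \<sigma> (sigma2 ar u uh P) A))"
      and r: "r \<in> T"
    obtain Ps Ns G where rr: "r = (Ps, Ns, G)" by (cases r) auto
    show "case r of (Ps, Ns, G) \<Rightarrow> \<forall>\<sigma>. eval F Q P \<sigma> G \<longrightarrow>
      ((\<exists>A\<in>Ps. (atval F \<sigma> uh A \<or> atval F \<sigma> P A) \<longrightarrow> atval F \<sigma> u A) \<or>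
       (\<exists>A\<in>Ns. (atval F \<sigma> u A \<or> \<not> atval F \<sigma> P A) \<longrightarrow> atval F \<sigma> uh A))"
      using a r rule[of Ps Ns G] unfolding rr by fastforce
  next
    fix r assume a: "\<forall>(Ps, Ns, G)\<in>T. \<forall>\<sigma>. eval F Q P \<sigma> G \<longrightarrow>
      ((\<exists>A\<in>Ps. (atval F \<sigma> uh A \<or> atval F \<sigma> P A) \<longrightarrow> atval F \<sigma> u A) \<or>
       (\<exists>A\<in>Ns. (atval F \<sigma> u A \<or> \<not> atval F \<sigma> P A) \<longrightarrow> atval F \<sigma> uh A))"
      and r: "r \<in> T"
    obtain Ps Ns G where rr: "r = (Ps, Ns, G)" by (cases r) auto
    show "case r of (Ps, Ns, G) \<Rightarrow> \<forall>\<sigma>. eval F Q P \<sigma> G \<longrightarrow>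
      ((\<exists>A\<in>Ps. atval F \<sigma> (sigma2 ar u uh P) A) \<or> (\<exists>A\<in>Ns. \<not> atval F \<sigma> (sigma2 ar u uh P) A))"
      using a r rule[of Ps Ns G] unfolding rr by fastforce
  qed
qed

end
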